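(* Let $\ket\Psi_{ABC}=\ket{\psi_1}_{A_1B_1}\otimes\ket{\psi_2}_{A_2C_1}\otimes\ket{\psi_3}_{B_2C_2}$ with $\mathcal H_A=\mathcal H_{A_1}\otimes\mathcal H_{A_2}$, $\mathcal H_B=\mathcal H_{B_1}\otimes\mathcal H_{B_2}$, $\mathcal H_C=\mathcal H_{C_1}\otimes\mathcal H_{C_2}$ and $\ket{\psi_i}$ unit vectors. Then for every integer $n\ge2$, $Z_n(A:B:C)_{\ket\Psi}>0$ and $$G_n(A:B:C)_{\ket\Psi}=\tfrac12\big(S_n(A)+S_n(B)+S_n(C)\big),$$ where $S_n(X)=\frac{1}{1-n}\log\operatorname{tr}\rho_X^n$ is the Rényi-$n$ entropy of the reduced state of $\ket\Psi$ on $X$. In particular $G(A:B:C)_{\ket\Psi}=\tfrac12(S_2(A)+S_2(B)+S_2(C))$.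
   Context: For a subsystem $X$ and $\pi\in S_N$, $\pi_X$ permutes the $N$ copies of $\mathcal H_X$ according to $\pi$ and acts trivially otherwise. For integer $n\ge2$, arrange $1,\dots,n^2$ in an $n\times n$ array row by row; $\pi^{(1)}\in S_{n^2}$ is the product of the $n$ cycles $(kn+1,\dots,kn+n)$, $k=0,\dots,n-1$ (cycling each row), and $\pi^{(2)}\in S_{n^2}$ is the product of the $n$ cycles $(j,n+j,\dots,(n-1)n+j)$, $j=1,\dots,n$ (cycling each column). $Z_n(A:B:C)_{\ket\Psi}=\bra\Psi^{\otimes n^2}(\pi^{(1)}_A\otimes\pi^{(2)}_B\otimes\mathrm{id}_C)\ket\Psi^{\otimes n^2}$ and, when $Z_n>0$, $G_n(A:B:C)_{\ket\Psi}=\frac{1}{n(1-n)}\log Z_n(A:B:C)_{\ket\Psi}$. For $n=2$, $G_2=G$ where $G(A:B:C)=-\tfrac12\log\bra\Psi^{\otimes4}((12)(34)_A\otimes(13)(24)_B\otimes(14)(23)_C)\ket\Psi^{\otimes4}$. *)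

theory Defs
  imports Complex_Main "HOL-Library.FuncSet"
begin

text \<open>Finite-dimensional pure states are amplitude functions on finite index types.
A tripartite state on A,B,C is a function Psi a b c.\<close>

definition unit_bip :: "('x::finite \<Rightarrow> 'y::finite \<Rightarrow> complex) \<Rightarrow> bool" where
  "unit_bip \<psi> \<longleftrightarrow> (\<Sum>x\<in>UNIV. \<Sum>y\<in>UNIV. (cmod (\<psi> x y))^2) = 1"

definition tri_state ::
  "('a1 \<Rightarrow> 'b1 \<Rightarrow> complex) \<Rightarrow> ('a2 \<Rightarrow> 'c1 \<Rightarrow> complex) \<Rightarrow> ('b2 \<Rightarrow> 'c2 \<Rightarrow> complex)
   \<Rightarrow> ('a1 \<times> 'a2) \<Rightarrow> ('b1 \<times> 'b2) \<Rightarrow> ('c1 \<times> 'c2) \<Rightarrow> complex" where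
  "tri_state \<psi>1 \<psi>2 \<psi>3 a b c = \<psi>1 (fst a) (fst b) * \<psi>2 (snd a) (fst c) * \<psi>3 (snd b) (snd c)"

text \<open>Expectation value of pi_A tensor pi_B tensor pi_C in Psi^{tensor N}, copies labelled 1..N.
(pi_X acts by (pi Phi)(x_1..x_N) = Phi(x_{pi 1},...,x_{pi N}).)\<close>
definition perm_expect ::
  "('a::finite \<Rightarrow> 'b::finite \<Rightarrow> 'c::finite \<Rightarrow> complex) \<Rightarrow> nat
   \<Rightarrow> (nat \<Rightarrow> nat) \<Rightarrow> (nat \<Rightarrow> nat) \<Rightarrow> (nat \<Rightarrow> nat) \<Rightarrow> complex" where
  "perm_expect \<Psi> N \<sigma>A \<sigma>B \<sigma>C =
     (\<Sum>a \<in> {1..N} \<rightarrow>\<^sub>E UNIV. \<Sum>b \<in> {1..N} \<rightarrow>\<^sub>E UNIV. \<Sum>c \<in> {1..N} \<rightarrow>\<^sub>E UNIV.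
        (\<Prod>i\<in>{1..N}. cnj (\<Psi> (a i) (b i) (c i))) *
        (\<Prod>i\<in>{1..N}. \<Psi> (a (\<sigma>A i)) (b (\<sigma>B i)) (c (\<sigma>C i))))"

text \<open>pi^(1): cycle each row (kn+1 .. kn+n) of the n x n array of 1..n^2.\<close>
definition row_cycle :: "nat \<Rightarrow> nat \<Rightarrow> nat" where
  "row_cycle n i = (if 1 \<le> i \<and> i \<le> n^2
     then ((i - 1) div n) * n + (((i - 1) mod n + 1) mod n) + 1 else i)"

text \<open>pi^(2): cycle each column (j, n+j, ..., (n-1)n+j).\<close>
definition col_cycle :: "nat \<Rightarrow> nat \<Rightarrow> nat" where
  "col_cycle n i = (if 1 \<le> i \<and> i \<le> n^2
     then (((i - 1) div n + 1) mod n) * n + (i - 1) mod n + 1 else i)"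

definition Zn :: "nat \<Rightarrow> ('a::finite \<Rightarrow> 'b::finite \<Rightarrow> 'c::finite \<Rightarrow> complex) \<Rightarrow> complex" where
  "Zn n \<Psi> = perm_expect \<Psi> (n^2) (row_cycle n) (col_cycle n) id"

text \<open>G_n, meaningful when Z_n is a positive real (then Z_n = Re Z_n).\<close>
definition Gn :: "nat \<Rightarrow> ('a::finite \<Rightarrow> 'b::finite \<Rightarrow> 'c::finite \<Rightarrow> complex) \<Rightarrow> real" where
  "Gn n \<Psi> = ln (Re (Zn n \<Psi>)) / (real n * (1 - real n))"

definition permGA :: "nat \<Rightarrow> nat" where
  "permGA i = (if i = 1 then 2 else if i = 2 then 1 else if i = 3 then 4 else if i = 4 then 3 else i)"
definition permGB :: "nat \<Rightarrow> nat" where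
  "permGB i = (if i = 1 then 3 else if i = 3 then 1 else if i = 2 then 4 else if i = 4 then 2 else i)"
definition permGC :: "nat \<Rightarrow> nat" where
  "permGC i = (if i = 1 then 4 else if i = 4 then 1 else if i = 2 then 3 else if i = 3 then 2 else i)"

definition G :: "('a::finite \<Rightarrow> 'b::finite \<Rightarrow> 'c::finite \<Rightarrow> complex) \<Rightarrow> real" where
  "G \<Psi> = - (1/2) * ln (Re (perm_expect \<Psi> 4 permGA permGB permGC))"

definition mmul :: "('x::finite \<Rightarrow> 'x \<Rightarrow> complex) \<Rightarrow> ('x \<Rightarrow> 'x \<Rightarrow> complex) \<Rightarrow> 'x \<Rightarrow> 'x \<Rightarrow> complex" where
  "mmul M N x z = (\<Sum>y\<in>UNIV. M x y * N y z)"

fun mpow :: "('x::finite \<Rightarrow> 'x \<Rightarrow> complex) \<Rightarrow> nat \<Rightarrow> 'x \<Rightarrow> 'x \<Rightarrow> complex" where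
  "mpow M 0 = (\<lambda>x y. if x = y then 1 else 0)"
| "mpow M (Suc k) = mmul (mpow M k) M"

definition mtrace :: "('x::finite \<Rightarrow> 'x \<Rightarrow> complex) \<Rightarrow> complex" where
  "mtrace M = (\<Sum>x\<in>UNIV. M x x)"

definition rhoA :: "('a::finite \<Rightarrow> 'b::finite \<Rightarrow> 'c::finite \<Rightarrow> complex) \<Rightarrow> 'a \<Rightarrow> 'a \<Rightarrow> complex" where
  "rhoA \<Psi> x x' = (\<Sum>b\<in>UNIV. \<Sum>c\<in>UNIV. \<Psi> x b c * cnj (\<Psi> x' b c))"
definition rhoB :: "('a::finite \<Rightarrow> 'b::finite \<Rightarrow> 'c::finite \<Rightarrow> complex) \<Rightarrow> 'b \<Rightarrow> 'b \<Rightarrow> complex" where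
  "rhoB \<Psi> y y' = (\<Sum>a\<in>UNIV. \<Sum>c\<in>UNIV. \<Psi> a y c * cnj (\<Psi> a y' c))"
definition rhoC :: "('a::finite \<Rightarrow> 'b::finite \<Rightarrow> 'c::finite \<Rightarrow> complex) \<Rightarrow> 'c \<Rightarrow> 'c \<Rightarrow> complex" where
  "rhoC \<Psi> z z' = (\<Sum>a\<in>UNIV. \<Sum>b\<in>UNIV. \<Psi> a b z * cnj (\<Psi> a b z'))"

text \<open>Renyi-n entropy S_n = log(tr rho^n)/(1-n) (tr rho^n is a positive real for a density matrix).\<close>
definition renyi :: "nat \<Rightarrow> ('x::finite \<Rightarrow> 'x \<Rightarrow> complex) \<Rightarrow> real" where
  "renyi n \<rho> = ln (Re (mtrace (mpow \<rho> n))) / (1 - real n)"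

end

theory Submission
  imports Defs
begin


definition mm :: "('x \<Rightarrow> 'y::finite \<Rightarrow> complex) \<Rightarrow> ('y \<Rightarrow> 'z \<Rightarrow> complex) \<Rightarrow> 'x \<Rightarrow> 'z \<Rightarrow> complex" where
  "mm A B x z = (\<Sum>y\<in>UNIV. A x y * B y z)"

definition ch :: "('x \<Rightarrow> 'y \<Rightarrow> complex) \<Rightarrow> 'y \<Rightarrow> 'x \<Rightarrow> complex" where
  "ch A y x = cnj (A x y)"

definition idm :: "'x \<Rightarrow> 'x \<Rightarrow> complex" where
  "idm x y = (if x = y then 1 else 0)"

definition frob :: "('x::finite \<Rightarrow> 'y::finite \<Rightarrow> complex) \<Rightarrow> real" where
  "frob A = (\<Sum>x\<in>UNIV. \<Sum>y\<in>UNIV. (cmod (A x y))^2)"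

lemma mmul_mm: "mmul = mm"
  by (intro ext) (simp add: mmul_def mm_def)

lemma mpow_0': "mpow M 0 = idm" by (simp add: idm_def[abs_def])
lemma mpow_Suc': "mpow M (Suc k) = mm (mpow M k) M" by (simp add: mmul_mm)

lemma mm_assoc: "mm (mm A B) C = mm A (mm B C)"
  apply (intro ext)
  apply (simp add: mm_def sum_distrib_left sum_distrib_right mult.assoc)
  by (rule sum.swap)

lemma mm_idm_right: "mm A idm = A"
  by (intro ext) (simp add: mm_def idm_def if_distrib sum.delta' cong: if_cong)
lemma mm_idm_left: "mm idm A = A"
proof (intro ext)
  fix x z
  have "\<And>y. (if x = y then 1 else 0) * A y z = (if x = y then A y z else 0)" by simp
  then show "mm idm A x z = A x z" by (simp add: mm_def idm_def)
qed

declare mpow.simps(1)[simp del]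
declare mpow_0'[simp]

lemma mpow_add: "mpow M (a + b) = mm (mpow M a) (mpow M b)"
  by (induction b) (simp_all add: mm_idm_right mmul_mm mm_assoc)

lemma mpow_one: "mpow M 1 = M"
  by (simp add: mmul_mm mm_idm_left)

lemma mpow_Suc0: "mpow M (Suc 0) = M"
  using mpow_one[of M] by simp

lemma mpow_Suc_left: "mpow M (Suc k) = mm M (mpow M k)"
  using mpow_add[of M 1 k] mpow_one[of M] by (simp add: mmul_mm)

lemma mpow_comm: "mm M (mpow M k) = mm (mpow M k) M"
  by (metis mpow_Suc_left mpow.simps(2) mmul_mm)

lemma tr_cyc: "mtrace (mm A B) = mtrace (mm B A)"
  unfolding mtrace_def mm_def by (subst sum.swap) (simp add: mult.commute)

lemma ch_mm: "ch (mm A B) = mm (ch B) (ch A)"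
  by (intro ext) (simp add: ch_def mm_def mult.commute)
lemma ch_ch[simp]: "ch (ch A) = A"
  by (intro ext) (simp add: ch_def)
lemma ch_idm[simp]: "ch idm = idm"
  by (intro ext) (simp add: ch_def idm_def)

lemma frob_tr: "mtrace (mm A (ch A)) = complex_of_real (frob A)"
  unfolding mtrace_def mm_def ch_def frob_def
  by (simp add: complex_norm_square[symmetric] del: of_real_power)

lemma frob_nonneg: "frob A \<ge> 0"
  unfolding frob_def by (intro sum_nonneg) auto

lemma frob_zero: "frob A = 0 \<longleftrightarrow> A = (\<lambda>x y. 0)"
proof
  assume "frob A = 0"
  then have "\<forall>x\<in>UNIV. (\<Sum>y\<in>UNIV. (cmod (A x y))^2) = 0"
    unfolding frob_def by (subst (asm) sum_nonneg_eq_0_iff) (auto intro: sum_nonneg)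
  then have "\<forall>x y. (cmod (A x y))^2 = 0"
    by (auto simp: sum_nonneg_eq_0_iff)
  then show "A = (\<lambda>x y. 0)" by (intro ext) auto
qed (simp add: frob_def)


lemma mm_zero_left: "mm (\<lambda>x y. 0) B = (\<lambda>x y. 0)"
  by (intro ext) (simp add: mm_def)

lemma mtrace_zero: "mtrace (\<lambda>x y. 0) = 0" by (simp add: mtrace_def)

lemma herm_pow: assumes "ch R = R" shows "ch (mpow R k) = mpow R k"
proof (induction k)
  case (Suc k)
  have "ch (mpow R (Suc k)) = mm (ch R) (ch (mpow R k))" by (simp add: mpow_Suc' ch_mm del: mpow.simps)
  also have "\<dots> = mpow R (Suc k)" using Suc assms by (simp add: mpow_Suc_left del: mpow.simps)
  finally show ?case .
qed simp

lemma idm_nonzero: "(idm :: 'x \<Rightarrow> 'x \<Rightarrow> complex) \<noteq> (\<lambda>x y. 0)"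
proof
  assume "(idm :: 'x \<Rightarrow> 'x \<Rightarrow> complex) = (\<lambda>x y. 0)"
  then have "idm (undefined::'x) undefined = (0::complex)" by metis
  then show False by (simp add: idm_def)
qed

lemma pow_nonzero:
  fixes \<psi> :: "'x::finite \<Rightarrow> 'y::finite \<Rightarrow> complex"
  assumes nz: "frob \<psi> \<noteq> 0"
  shows "mpow (mm \<psi> (ch \<psi>)) j \<noteq> (\<lambda>x y. 0)"
proof (induction j rule: less_induct)
  case (less j)
  define R where "R = mm \<psi> (ch \<psi>)"
  have chR: "ch R = R" by (simp add: R_def ch_mm)
  show ?case
  proof (cases "j \<le> 1")
    case True
    then consider "j = 0" | "j = 1" by linarith
    then show ?thesis
    proof cases
      case 1 then show ?thesis by (simp add: idm_nonzero)
    next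
      case 2
      show ?thesis
      proof
        assume "mpow (mm \<psi> (ch \<psi>)) j = (\<lambda>x y. 0)"
        then have "mm \<psi> (ch \<psi>) = (\<lambda>x y. 0)" using 2 by (simp add: mpow_Suc0 del: mpow.simps)
        then have "mtrace (mm \<psi> (ch \<psi>)) = 0" by (simp add: mtrace_zero)
        then show False using nz by (simp add: frob_tr)
      qed
    qed
  next
    case False
    define m where "m = (j + 1) div 2"
    have mj: "m < j" "j \<le> m + m" using False by (auto simp: m_def)
    show ?thesis
    proof
      assume z: "mpow (mm \<psi> (ch \<psi>)) j = (\<lambda>x y. 0)"
      have "mpow R (m + m) = mm (mpow R j) (mpow R (m + m - j))"
        using mj mpow_add[of R j "m + m - j"] by simp
      then have "mpow R (m + m) = (\<lambda>x y. 0)" using z by (simp add: R_def mm_zero_left)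
      then have "mtrace (mm (mpow R m) (ch (mpow R m))) = 0"
        by (simp add: herm_pow[OF chR] mpow_add[symmetric] mtrace_zero del: mpow.simps)
      then have "frob (mpow R m) = 0" by (simp add: frob_tr)
      then have "mpow R m = (\<lambda>x y. 0)" by (simp add: frob_zero)
      then show False using less.IH[OF mj(1)] by (simp add: R_def)
    qed
  qed
qed

lemma tr_pos:
  fixes \<psi> :: "'x::finite \<Rightarrow> 'y::finite \<Rightarrow> complex"
  assumes nz: "frob \<psi> \<noteq> 0"
  shows "\<exists>t>0. mtrace (mpow (mm \<psi> (ch \<psi>)) n) = complex_of_real t"
proof -
  define R where "R = mm \<psi> (ch \<psi>)"
  have chR: "ch R = R" by (simp add: R_def ch_mm)
  have "n = n div 2 + n div 2 \<or> n = Suc (n div 2 + n div 2)" by presburger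
  then obtain k where "n = k + k \<or> n = Suc (k + k)" by blast
  then show ?thesis
  proof
    assume n: "n = k + k"
    have "mpow R n = mm (mpow R k) (ch (mpow R k))"
      by (simp add: n mpow_add herm_pow[OF chR] del: mpow.simps)
    then have "mtrace (mpow R n) = complex_of_real (frob (mpow R k))"
      by (simp add: frob_tr)
    moreover have "frob (mpow R k) > 0"
      using frob_nonneg[of "mpow R k"] pow_nonzero[OF nz, of k] frob_zero[of "mpow R k"]
      by (simp add: R_def)
    ultimately show ?thesis by (auto simp: R_def)
  next
    assume n: "n = Suc (k + k)"
    have "mpow R n = mm (mpow R k) (mm R (mpow R k))"
      by (simp add: n mpow_add[symmetric] mpow_Suc_left[symmetric] del: mpow.simps)
    also have "\<dots> = mm (mm (mpow R k) \<psi>) (ch (mm (mpow R k) \<psi>))"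
      using herm_pow[OF chR, of k] by (simp add: ch_mm mm_assoc R_def)
    finally have tr: "mtrace (mpow R n) = complex_of_real (frob (mm (mpow R k) \<psi>))"
      by (simp add: frob_tr)
    have "mm (mpow R k) \<psi> \<noteq> (\<lambda>x y. 0)"
    proof
      assume "mm (mpow R k) \<psi> = (\<lambda>x y. 0)"
      then have "mpow R (Suc k) = (\<lambda>x y. 0)"
        by (simp add: mpow_Suc' R_def mm_assoc[symmetric] mm_zero_left del: mpow.simps)
      then show False using pow_nonzero[OF nz, of "Suc k"] by (simp add: R_def)
    qed
    then have "frob (mm (mpow R k) \<psi>) > 0"
      using frob_nonneg[of "mm (mpow R k) \<psi>"] frob_zero[of "mm (mpow R k) \<psi>"] by simp
    then show ?thesis using tr by (auto simp: R_def)
  qed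
qed

definition tp :: "('x \<Rightarrow> 'y \<Rightarrow> complex) \<Rightarrow> 'y \<Rightarrow> 'x \<Rightarrow> complex" where
  "tp A y x = A x y"

lemma mpow_tp: "mpow (tp M) n = tp (mpow M n)"
proof (induction n)
  case 0 then show ?case by (intro ext) (simp add: tp_def idm_def)
next
  case (Suc n)
  have "mpow (tp M) (Suc n) = mm (tp (mpow M n)) (tp M)" using Suc by (simp add: mpow_Suc' del: mpow.simps)
  also have "\<dots> = tp (mm M (mpow M n))" by (intro ext) (simp add: tp_def mm_def mult.commute)
  finally show ?case by (simp add: mpow_Suc_left[symmetric] del: mpow.simps)
qed

lemma mtrace_tp: "mtrace (tp M) = mtrace M" by (simp add: mtrace_def tp_def)

lemma mpow_swap: "mpow (mm \<psi> (ch \<psi>)) (Suc n) = mm \<psi> (mm (mpow (mm (ch \<psi>) \<psi>) n) (ch \<psi>))"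
proof (induction n)
  case 0 then show ?case by (simp add: mpow_Suc0 mm_idm_left del: mpow.simps)
next
  case (Suc n)
  have "mpow (mm \<psi> (ch \<psi>)) (Suc (Suc n)) = mm (mpow (mm \<psi> (ch \<psi>)) (Suc n)) (mm \<psi> (ch \<psi>))"
    by (simp only: mpow_Suc')
  also have "\<dots> = mm (mm \<psi> (mm (mpow (mm (ch \<psi>) \<psi>) n) (ch \<psi>))) (mm \<psi> (ch \<psi>))"
    by (simp only: Suc.IH)
  also have "\<dots> = mm \<psi> (mm (mpow (mm (ch \<psi>) \<psi>) (Suc n)) (ch \<psi>))"
    by (simp only: mpow_Suc' mm_assoc)
  finally show ?case .
qed

lemma tr_swap:
  assumes "n \<ge> 1"
  shows "mtrace (mpow (mm (ch \<psi>) \<psi>) n) = mtrace (mpow (mm \<psi> (ch \<psi>)) n)"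
proof -
  obtain k where n: "n = Suc k" using assms by (cases n) auto
  show ?thesis
    by (simp only: n mpow_swap, subst tr_cyc) (simp add: mm_assoc mpow_Suc' del: mpow.simps)
qed




lemma sum_PiE_insert:
  fixes F :: "('i \<Rightarrow> 'x::finite) \<Rightarrow> 'c::comm_monoid_add"
  assumes "a \<notin> S"
  shows "(\<Sum>y\<in>PiE (insert a S) (\<lambda>_. UNIV). F y) = (\<Sum>c\<in>UNIV. \<Sum>y\<in>PiE S (\<lambda>_. UNIV). F (y(a := c)))"
proof -
  have "(\<Sum>y\<in>PiE (insert a S) (\<lambda>_. UNIV). F y) = (\<Sum>(c,y)\<in>UNIV \<times> PiE S (\<lambda>_. UNIV). F (y(a := c)))"
    using assms
    by (intro sum.reindex_bij_witness[of _ "\<lambda>(y,g). g(a := y)" "\<lambda>g. (g a, g(a := undefined))"])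
       (auto simp: PiE_def extensional_def)
  also have "\<dots> = (\<Sum>c\<in>UNIV. \<Sum>y\<in>PiE S (\<lambda>_. UNIV). F (y(a := c)))"
    by (subst sum.cartesian_product) auto
  finally show ?thesis .
qed

lemma path_sum:
  fixes R :: "'x::finite \<Rightarrow> 'x \<Rightarrow> complex"
  shows "(\<Sum>y\<in>PiE {..<Suc k} (\<lambda>_. UNIV). W (y k) (y 0) * (\<Prod>j<k. R (y (Suc j)) (y j)))
       = (\<Sum>u\<in>UNIV. \<Sum>v\<in>UNIV. W v u * mpow R k v u)"
proof (induction k arbitrary: W)
  case 0
  have "(\<Sum>y\<in>PiE {..<Suc 0} (\<lambda>_. UNIV). W (y 0) (y 0) * (\<Prod>j<0. R (y (Suc j)) (y j)))
      = (\<Sum>y\<in>PiE (insert (0::nat) {}) (\<lambda>_. UNIV). W (y 0) (y 0))"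
  proof -
    have "{..<Suc 0} = insert (0::nat) {}" by auto
    then show ?thesis by simp
  qed
  also have "\<dots> = (\<Sum>c\<in>UNIV. W c c)" by (subst sum_PiE_insert) auto
  also have "\<dots> = (\<Sum>u\<in>UNIV. \<Sum>v\<in>UNIV. W v u * mpow R 0 v u)"
  proof -
    have "\<And>u v. W v u * idm v u = (if v = u then W v u else 0)" by (simp add: idm_def)
    then show ?thesis by (simp add: sum.delta)
  qed
  finally show ?case by simp
next
  case (Suc k)
  have ins: "{..<Suc (Suc k)} = insert (Suc k) {..<Suc k}" by auto
  have "(\<Sum>y\<in>PiE {..<Suc (Suc k)} (\<lambda>_. UNIV). W (y (Suc k)) (y 0) * (\<Prod>j<Suc k. R (y (Suc j)) (y j)))
    = (\<Sum>c\<in>UNIV. \<Sum>y\<in>PiE {..<Suc k} (\<lambda>_. UNIV). W c (y 0) * (R c (y k) * (\<Prod>j<k. R (y (Suc j)) (y j))))"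
  proof -
    have eq: "W ((y(Suc k:=c)) (Suc k)) ((y(Suc k:=c)) 0) * (\<Prod>j<Suc k. R ((y(Suc k:=c)) (Suc j)) ((y(Suc k:=c)) j))
       = W c (y 0) * (R c (y k) * (\<Prod>j<k. R (y (Suc j)) (y j)))" for c y
    proof -
      have "(\<Prod>j<k. R ((y(Suc k:=c)) (Suc j)) ((y(Suc k:=c)) j)) = (\<Prod>j<k. R (y (Suc j)) (y j))"
        by (rule prod.cong) auto
      then show ?thesis by (simp add: prod.lessThan_Suc mult_ac)
    qed
    have "(\<Sum>y\<in>PiE (insert (Suc k) {..<Suc k}) (\<lambda>_. UNIV). W (y (Suc k)) (y 0) * (\<Prod>j<Suc k. R (y (Suc j)) (y j)))
      = (\<Sum>c\<in>UNIV. \<Sum>y\<in>PiE {..<Suc k} (\<lambda>_. UNIV). W ((y(Suc k:=c)) (Suc k)) ((y(Suc k:=c)) 0) * (\<Prod>j<Suc k. R ((y(Suc k:=c)) (Suc j)) ((y(Suc k:=c)) j)))"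
      by (rule sum_PiE_insert) simp
    then show ?thesis unfolding ins eq .
  qed
  also have "\<dots> = (\<Sum>y\<in>PiE {..<Suc k} (\<lambda>_. UNIV). (\<lambda>v u. \<Sum>c\<in>UNIV. W c u * R c v) (y k) (y 0) * (\<Prod>j<k. R (y (Suc j)) (y j)))"
    by (subst sum.swap) (simp add: sum_distrib_right mult.assoc)
  also have "\<dots> = (\<Sum>u\<in>UNIV. \<Sum>v\<in>UNIV. (\<Sum>c\<in>UNIV. W c u * R c v) * mpow R k v u)"
    by (rule Suc.IH)
  also have "\<dots> = (\<Sum>u\<in>UNIV. \<Sum>c\<in>UNIV. W c u * mpow R (Suc k) c u)"
  proof (rule sum.cong[OF refl])
    fix u
    show "(\<Sum>v\<in>UNIV. (\<Sum>c\<in>UNIV. W c u * R c v) * mpow R k v u) = (\<Sum>c\<in>UNIV. W c u * mpow R (Suc k) c u)"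
      unfolding mpow_Suc_left mm_def sum_distrib_left sum_distrib_right mult.assoc
      by (rule sum.swap)
  qed
  finally show ?case by simp
qed

lemma cycle_sum:
  fixes R :: "'x::finite \<Rightarrow> 'x \<Rightarrow> complex"
  assumes "n > 0"
  shows "(\<Sum>y\<in>PiE {..<n} (\<lambda>_. UNIV). \<Prod>j<n. R (y (Suc j mod n)) (y j)) = mtrace (mpow R n)"
proof -
  obtain k where n: "n = Suc k" using assms by (cases n) auto
  have e: "\<And>y. (\<Prod>j<Suc k. R (y (Suc j mod Suc k)) (y j)) = R (y 0) (y k) * (\<Prod>j<k. R (y (Suc j)) (y j))"
    by (simp add: prod.lessThan_Suc mult.commute)
  have "(\<Sum>y\<in>PiE {..<n} (\<lambda>_. UNIV). \<Prod>j<n. R (y (Suc j mod n)) (y j))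
     = (\<Sum>y\<in>PiE {..<Suc k} (\<lambda>_. UNIV). R (y 0) (y k) * (\<Prod>j<k. R (y (Suc j)) (y j)))"
    by (simp only: e n)
  also have "\<dots> = (\<Sum>u\<in>UNIV. \<Sum>v\<in>UNIV. R u v * mpow R k v u)"
    using path_sum[of "\<lambda>v u. R u v" k R] by simp
  also have "\<dots> = mtrace (mpow R n)"
    by (simp add: n mtrace_def mpow_Suc_left mm_def del: mpow.simps)
  finally show ?thesis .
qed




lemma cyc_lemma:
  fixes R :: "'x::finite \<Rightarrow> 'x \<Rightarrow> complex" and g :: "'k \<times> nat \<Rightarrow> 'i"
  assumes K: "finite K" and bij: "bij_betw g (K \<times> {..<n}) I" and n: "n > 0"
    and cyc: "\<And>k j. k \<in> K \<Longrightarrow> j < n \<Longrightarrow> \<pi> (g (k, j)) = g (k, Suc j mod n)"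
  shows "(\<Sum>x\<in>PiE I (\<lambda>_. UNIV). \<Prod>l\<in>I. R (x (\<pi> l)) (x l)) = mtrace (mpow R n) ^ card K"
proof -
  define gi where "gi = the_inv_into (K \<times> {..<n}) g"
  have gi1: "l \<in> I \<Longrightarrow> gi l \<in> K \<times> {..<n} \<and> g (gi l) = l" for l
    using bij unfolding gi_def
    by (metis bij_betw_def f_the_inv_into_f_bij_betw the_inv_into_into subset_refl)
  have gi2: "p \<in> K \<times> {..<n} \<Longrightarrow> gi (g p) = p" for p
    using bij unfolding gi_def by (simp add: bij_betw_def the_inv_into_f_f)
  have gI: "p \<in> K \<times> {..<n} \<Longrightarrow> g p \<in> I" for p using bij by (auto simp: bij_betw_def)
  define h where "h z = (\<lambda>l. if l \<in> I then z (fst (gi l)) (snd (gi l)) else undefined)" for z :: "'k \<Rightarrow> nat \<Rightarrow> 'x"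
  define jj where "jj x = (\<lambda>k\<in>K. \<lambda>j\<in>{..<n}. x (g (k, j)))" for x :: "'i \<Rightarrow> 'x"
  define F where "F y = (\<Prod>j<n. R (y (Suc j mod n)) (y j))" for y
  have hval: "z \<in> PiE K (\<lambda>_. PiE {..<n} (\<lambda>_. UNIV)) \<Longrightarrow> k \<in> K \<Longrightarrow> j < n \<Longrightarrow> h z (g (k, j)) = z k j" for z k j
    using gi2[of "(k,j)"] gI[of "(k,j)"] by (simp add: h_def)
  have hj: "h (jj x) = x" if x: "x \<in> PiE I (\<lambda>_. UNIV)" for x
  proof
    fix l show "h (jj x) l = x l"
    proof (cases "l \<in> I")
      case True
      then show ?thesis using gi1[OF True] by (auto simp: h_def jj_def)
    next
      case False then show ?thesis using x by (auto simp: h_def PiE_def extensional_def)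
    qed
  qed
  have "(\<Sum>x\<in>PiE I (\<lambda>_. UNIV). \<Prod>l\<in>I. R (x (\<pi> l)) (x l))
      = (\<Sum>z\<in>PiE K (\<lambda>_. PiE {..<n} (\<lambda>_. UNIV)). \<Prod>l\<in>I. R (h z (\<pi> l)) (h z l))"
  proof (rule sum.reindex_bij_witness[of _ h jj])
    fix x :: "'i \<Rightarrow> 'x" assume x: "x \<in> PiE I (\<lambda>_. UNIV)"
    show "h (jj x) = x" by (rule hj[OF x])
    show "jj x \<in> PiE K (\<lambda>_. PiE {..<n} (\<lambda>_. UNIV))" by (auto simp: jj_def)
  next
    fix z :: "'k \<Rightarrow> nat \<Rightarrow> 'x" assume z: "z \<in> PiE K (\<lambda>_. PiE {..<n} (\<lambda>_. UNIV))"
    show "jj (h z) = z"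
    proof
      fix k show "jj (h z) k = z k"
      proof (cases "k \<in> K")
        case True
        have "(\<lambda>j\<in>{..<n}. h z (g (k, j))) = z k"
        proof
          fix j show "(\<lambda>j\<in>{..<n}. h z (g (k, j))) j = z k j"
          proof (cases "j < n")
            case False
            have "z k \<in> PiE {..<n} (\<lambda>_. UNIV)" using z True by auto
            then show ?thesis using False by (auto simp: PiE_def extensional_def)
          qed (simp add: hval[OF z True])
        qed
        then show ?thesis using True by (simp add: jj_def)
      next
        case False then show ?thesis using z by (auto simp: jj_def PiE_def extensional_def)
      qed
    qed
    show "h z \<in> PiE I (\<lambda>_. UNIV)" by (auto simp: h_def)
  qed (simp add: hj)
  also have "\<dots> = (\<Sum>z\<in>PiE K (\<lambda>_. PiE {..<n} (\<lambda>_. UNIV)). \<Prod>k\<in>K. F (z k))"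
  proof (rule sum.cong[OF refl])
    fix z :: "'k \<Rightarrow> nat \<Rightarrow> 'x" assume z: "z \<in> PiE K (\<lambda>_. PiE {..<n} (\<lambda>_. UNIV))"
    have "(\<Prod>l\<in>I. R (h z (\<pi> l)) (h z l)) = (\<Prod>p\<in>K \<times> {..<n}. R (h z (\<pi> (g p))) (h z (g p)))"
      by (rule prod.reindex_bij_betw[OF bij, symmetric])
    also have "\<dots> = (\<Prod>p\<in>K \<times> {..<n}. R (z (fst p) (Suc (snd p) mod n)) (z (fst p) (snd p)))"
    proof (rule prod.cong[OF refl])
      fix p assume p: "p \<in> K \<times> {..<n}"
      obtain k j where pk: "p = (k, j)" "k \<in> K" "j < n" using p by auto
      have "Suc j mod n < n" using n by simp
      then show "R (h z (\<pi> (g p))) (h z (g p)) = R (z (fst p) (Suc (snd p) mod n)) (z (fst p) (snd p))"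
        using pk cyc[of k j] hval[OF z, of k] by simp
    qed
    also have "\<dots> = (\<Prod>k\<in>K. F (z k))"
      unfolding F_def by (subst prod.cartesian_product) (simp add: case_prod_unfold)
    finally show "(\<Prod>l\<in>I. R (h z (\<pi> l)) (h z l)) = (\<Prod>k\<in>K. F (z k))" .
  qed
  also have "\<dots> = (\<Prod>k\<in>K. \<Sum>y\<in>PiE {..<n} (\<lambda>_. UNIV). F y)"
    by (rule prod_sum_PiE[symmetric]) (auto intro: K finite_PiE)
  also have "\<dots> = mtrace (mpow R n) ^ card K"
    using cycle_sum[OF n, of R] by (simp add: F_def)
  finally show ?thesis .
qed

lemma bip_lemma:
  fixes \<psi> :: "'x::finite \<Rightarrow> 'y::finite \<Rightarrow> complex"
  assumes I: "finite I" and tau: "bij_betw \<tau> I I" and pi: "\<And>i. i \<in> I \<Longrightarrow> \<pi> (\<tau> i) = \<sigma> i"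
  shows "(\<Sum>x\<in>PiE I (\<lambda>_. UNIV). \<Sum>y\<in>PiE I (\<lambda>_. UNIV).
            (\<Prod>i\<in>I. cnj (\<psi> (x i) (y i))) * (\<Prod>i\<in>I. \<psi> (x (\<sigma> i)) (y (\<tau> i))))
       = (\<Sum>x\<in>PiE I (\<lambda>_. UNIV). \<Prod>l\<in>I. mm \<psi> (ch \<psi>) (x (\<pi> l)) (x l))"
proof (rule sum.cong[OF refl])
  fix x
  have "\<And>y. (\<Prod>i\<in>I. \<psi> (x (\<sigma> i)) (y (\<tau> i))) = (\<Prod>i\<in>I. \<psi> (x (\<pi> i)) (y i))"
  proof -
    fix y
    have "(\<Prod>i\<in>I. \<psi> (x (\<sigma> i)) (y (\<tau> i))) = (\<Prod>i\<in>I. \<psi> (x (\<pi> (\<tau> i))) (y (\<tau> i)))"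
      by (rule prod.cong) (auto simp: pi)
    also have "\<dots> = (\<Prod>i\<in>I. \<psi> (x (\<pi> i)) (y i))"
      by (rule prod.reindex_bij_betw[OF tau])
    finally show "?thesis y" .
  qed
  then have "(\<Sum>y\<in>PiE I (\<lambda>_. UNIV). (\<Prod>i\<in>I. cnj (\<psi> (x i) (y i))) * (\<Prod>i\<in>I. \<psi> (x (\<sigma> i)) (y (\<tau> i))))
     = (\<Sum>y\<in>PiE I (\<lambda>_. UNIV). \<Prod>i\<in>I. \<psi> (x (\<pi> i)) (y i) * cnj (\<psi> (x i) (y i)))"
    by (simp add: prod.distrib mult.commute)
  also have "\<dots> = (\<Prod>i\<in>I. \<Sum>v\<in>UNIV. \<psi> (x (\<pi> i)) v * cnj (\<psi> (x i) v))"
    by (rule prod_sum_PiE[symmetric]) (auto intro: I)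
  also have "\<dots> = (\<Prod>l\<in>I. mm \<psi> (ch \<psi>) (x (\<pi> l)) (x l))"
    by (simp add: mm_def ch_def)
  finally show "(\<Sum>y\<in>PiE I (\<lambda>_. UNIV). (\<Prod>i\<in>I. cnj (\<psi> (x i) (y i))) * (\<Prod>i\<in>I. \<psi> (x (\<sigma> i)) (y (\<tau> i))))
     = (\<Prod>l\<in>I. mm \<psi> (ch \<psi>) (x (\<pi> l)) (x l))" .
qed




definition zp :: "'i set \<Rightarrow> ('i \<Rightarrow> 'p) \<Rightarrow> ('i \<Rightarrow> 'q) \<Rightarrow> 'i \<Rightarrow> 'p \<times> 'q" where
  "zp I a1 a2 = (\<lambda>i. if i \<in> I then (a1 i, a2 i) else undefined)"

lemma split_sum:
  fixes F :: "('i \<Rightarrow> 'p::finite \<times> 'q::finite) \<Rightarrow> complex"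
  shows "(\<Sum>a\<in>PiE I (\<lambda>_. UNIV). F a) = (\<Sum>a1\<in>PiE I (\<lambda>_. UNIV). \<Sum>a2\<in>PiE I (\<lambda>_. UNIV). F (zp I a1 a2))"
proof -
  have ij: "zp I (restrict (fst \<circ> a) I) (restrict (snd \<circ> a) I) = a" if a: "a \<in> PiE I (\<lambda>_. UNIV)" for a :: "'i \<Rightarrow> 'p \<times> 'q"
    using a by (auto simp: zp_def PiE_def extensional_def fun_eq_iff)
  have "(\<Sum>a\<in>PiE I (\<lambda>_. UNIV). F a) = (\<Sum>(a1,a2)\<in>PiE I (\<lambda>_. UNIV) \<times> PiE I (\<lambda>_. UNIV). F (zp I a1 a2))"
  proof (rule sum.reindex_bij_witness[of _ "\<lambda>(a1,a2). zp I a1 a2" "\<lambda>a. (restrict (fst \<circ> a) I, restrict (snd \<circ> a) I)"])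
    fix a :: "'i \<Rightarrow> 'p \<times> 'q" assume a: "a \<in> PiE I (\<lambda>_. UNIV)"
    show "(case (restrict (fst \<circ> a) I, restrict (snd \<circ> a) I) of (a1, a2) \<Rightarrow> zp I a1 a2) = a"
      using a by (auto simp: zp_def PiE_def extensional_def fun_eq_iff)
  next
    fix p :: "('i \<Rightarrow> 'p) \<times> ('i \<Rightarrow> 'q)" assume p: "p \<in> PiE I (\<lambda>_. UNIV) \<times> PiE I (\<lambda>_. UNIV)"
    show "(\<lambda>a. (restrict (fst \<circ> a) I, restrict (snd \<circ> a) I)) (case p of (a1, a2) \<Rightarrow> zp I a1 a2) = p"
      using p by (cases p) (auto simp: zp_def PiE_def extensional_def fun_eq_iff)
  qed (simp_all add: ij, auto simp: zp_def)
  also have "\<dots> = (\<Sum>a1\<in>PiE I (\<lambda>_. UNIV). \<Sum>a2\<in>PiE I (\<lambda>_. UNIV). F (zp I a1 a2))"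
    by (subst sum.cartesian_product) simp
  finally show ?thesis .
qed

lemma six_sum:
  fixes X Y Z :: "_ \<Rightarrow> _ \<Rightarrow> complex"
  shows "(\<Sum>a1\<in>A1. \<Sum>a2\<in>A2. \<Sum>b1\<in>B1. \<Sum>b2\<in>B2. \<Sum>c1\<in>C1. \<Sum>c2\<in>C2. X a1 b1 * Y a2 c1 * Z b2 c2)
   = (\<Sum>a1\<in>A1. \<Sum>b1\<in>B1. X a1 b1) * (\<Sum>a2\<in>A2. \<Sum>c1\<in>C1. Y a2 c1) * (\<Sum>b2\<in>B2. \<Sum>c2\<in>C2. Z b2 c2)"
proof -
  have "(\<Sum>a1\<in>A1. \<Sum>a2\<in>A2. \<Sum>b1\<in>B1. \<Sum>b2\<in>B2. \<Sum>c1\<in>C1. \<Sum>c2\<in>C2. X a1 b1 * Y a2 c1 * Z b2 c2)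
     = (\<Sum>a1\<in>A1. \<Sum>b1\<in>B1. \<Sum>a2\<in>A2. \<Sum>b2\<in>B2. \<Sum>c1\<in>C1. \<Sum>c2\<in>C2. X a1 b1 * Y a2 c1 * Z b2 c2)"
    by (rule sum.cong[OF refl], rule sum.swap)
  also have "\<dots> = (\<Sum>a1\<in>A1. \<Sum>b1\<in>B1. \<Sum>a2\<in>A2. \<Sum>c1\<in>C1. \<Sum>b2\<in>B2. \<Sum>c2\<in>C2. X a1 b1 * Y a2 c1 * Z b2 c2)"
    by (rule sum.cong[OF refl], rule sum.cong[OF refl], rule sum.cong[OF refl], rule sum.swap)
  also have "\<dots> = (\<Sum>a1\<in>A1. \<Sum>b1\<in>B1. X a1 b1) * (\<Sum>a2\<in>A2. \<Sum>c1\<in>C1. Y a2 c1) * (\<Sum>b2\<in>B2. \<Sum>c2\<in>C2. Z b2 c2)"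
    unfolding mult.assoc sum_distrib_right by (unfold sum_distrib_left) (rule refl)
  finally show ?thesis .
qed


definition Eb :: "('x::finite \<Rightarrow> 'y::finite \<Rightarrow> complex) \<Rightarrow> nat \<Rightarrow> (nat \<Rightarrow> nat) \<Rightarrow> (nat \<Rightarrow> nat) \<Rightarrow> complex" where
  "Eb \<psi> N \<sigma> \<tau> = (\<Sum>x\<in>PiE {1..N} (\<lambda>_. UNIV). \<Sum>y\<in>PiE {1..N} (\<lambda>_. UNIV).
      (\<Prod>i\<in>{1..N}. cnj (\<psi> (x i) (y i))) * (\<Prod>i\<in>{1..N}. \<psi> (x (\<sigma> i)) (y (\<tau> i))))"

lemma factor:
  fixes \<psi>1 :: "'a1::finite \<Rightarrow> 'b1::finite \<Rightarrow> complex"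
    and \<psi>2 :: "'a2::finite \<Rightarrow> 'c1::finite \<Rightarrow> complex"
    and \<psi>3 :: "'b2::finite \<Rightarrow> 'c2::finite \<Rightarrow> complex"
  assumes sA: "\<And>i. i \<in> {1..N} \<Longrightarrow> \<sigma>A i \<in> {1..N}"
    and sB: "\<And>i. i \<in> {1..N} \<Longrightarrow> \<sigma>B i \<in> {1..N}"
    and sC: "\<And>i. i \<in> {1..N} \<Longrightarrow> \<sigma>C i \<in> {1..N}"
  shows "perm_expect (tri_state \<psi>1 \<psi>2 \<psi>3) N \<sigma>A \<sigma>B \<sigma>C = Eb \<psi>1 N \<sigma>A \<sigma>B * Eb \<psi>2 N \<sigma>A \<sigma>C * Eb \<psi>3 N \<sigma>B \<sigma>C"
proof -
  define I where "I = {1..N}"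
  define X where "X a1 b1 = (\<Prod>i\<in>I. cnj (\<psi>1 (a1 i) (b1 i))) * (\<Prod>i\<in>I. \<psi>1 (a1 (\<sigma>A i)) (b1 (\<sigma>B i)))" for a1 b1
  define Y where "Y a2 c1 = (\<Prod>i\<in>I. cnj (\<psi>2 (a2 i) (c1 i))) * (\<Prod>i\<in>I. \<psi>2 (a2 (\<sigma>A i)) (c1 (\<sigma>C i)))" for a2 c1
  define Z where "Z b2 c2 = (\<Prod>i\<in>I. cnj (\<psi>3 (b2 i) (c2 i))) * (\<Prod>i\<in>I. \<psi>3 (b2 (\<sigma>B i)) (c2 (\<sigma>C i)))" for b2 c2
  have pt: "(\<Prod>i\<in>I. cnj (tri_state \<psi>1 \<psi>2 \<psi>3 (zp I a1 a2 i) (zp I b1 b2 i) (zp I c1 c2 i))) *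
      (\<Prod>i\<in>I. tri_state \<psi>1 \<psi>2 \<psi>3 (zp I a1 a2 (\<sigma>A i)) (zp I b1 b2 (\<sigma>B i)) (zp I c1 c2 (\<sigma>C i)))
      = X a1 b1 * Y a2 c1 * Z b2 c2" for a1 a2 b1 b2 c1 c2
  proof -
    have p1: "(\<Prod>i\<in>I. cnj (tri_state \<psi>1 \<psi>2 \<psi>3 (zp I a1 a2 i) (zp I b1 b2 i) (zp I c1 c2 i)))
      = (\<Prod>i\<in>I. cnj (\<psi>1 (a1 i) (b1 i))) * (\<Prod>i\<in>I. cnj (\<psi>2 (a2 i) (c1 i))) * (\<Prod>i\<in>I. cnj (\<psi>3 (b2 i) (c2 i)))"
      by (simp add: prod.distrib[symmetric] tri_state_def zp_def)
    have p2: "(\<Prod>i\<in>I. tri_state \<psi>1 \<psi>2 \<psi>3 (zp I a1 a2 (\<sigma>A i)) (zp I b1 b2 (\<sigma>B i)) (zp I c1 c2 (\<sigma>C i)))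
      = (\<Prod>i\<in>I. \<psi>1 (a1 (\<sigma>A i)) (b1 (\<sigma>B i))) * (\<Prod>i\<in>I. \<psi>2 (a2 (\<sigma>A i)) (c1 (\<sigma>C i))) * (\<Prod>i\<in>I. \<psi>3 (b2 (\<sigma>B i)) (c2 (\<sigma>C i)))"
      unfolding prod.distrib[symmetric]
      by (rule prod.cong[OF refl]) (use sA sB sC in \<open>simp add: tri_state_def zp_def I_def\<close>)
    show ?thesis unfolding p1 p2 X_def Y_def Z_def by (simp add: mult_ac)
  qed
  have "perm_expect (tri_state \<psi>1 \<psi>2 \<psi>3) N \<sigma>A \<sigma>B \<sigma>C =
     (\<Sum>a1\<in>PiE I (\<lambda>_. UNIV). \<Sum>a2\<in>PiE I (\<lambda>_. UNIV). \<Sum>b1\<in>PiE I (\<lambda>_. UNIV). \<Sum>b2\<in>PiE I (\<lambda>_. UNIV).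
      \<Sum>c1\<in>PiE I (\<lambda>_. UNIV). \<Sum>c2\<in>PiE I (\<lambda>_. UNIV). X a1 b1 * Y a2 c1 * Z b2 c2)"
    unfolding perm_expect_def I_def[symmetric] by (simp only: split_sum pt)
  also have "\<dots> = Eb \<psi>1 N \<sigma>A \<sigma>B * Eb \<psi>2 N \<sigma>A \<sigma>C * Eb \<psi>3 N \<sigma>B \<sigma>C"
    unfolding six_sum by (simp add: Eb_def X_def Y_def Z_def I_def)
  finally show ?thesis .
qed




definition enc :: "nat \<Rightarrow> nat \<times> nat \<Rightarrow> nat" where
  "enc n p = fst p * n + snd p + 1"
definition dec :: "nat \<Rightarrow> nat \<Rightarrow> nat \<times> nat" where
  "dec n i = ((i - 1) div n, (i - 1) mod n)"

lemma enc_in: assumes "r < n" "c < n" shows "enc n (r, c) \<in> {1..n^2}"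
proof -
  have "r * n + c < Suc r * n" using assms by simp
  also have "\<dots> \<le> n * n" using assms by (intro mult_le_mono1) simp
  finally show ?thesis by (simp add: enc_def power2_eq_square)
qed

lemma dec_enc: assumes "c < n" shows "dec n (enc n (r, c)) = (r, c)"
  using assms by (simp add: enc_def dec_def)

lemma enc_dec: assumes "i \<in> {1..n^2}" "n > 0"
  shows "enc n (dec n i) = i" "fst (dec n i) < n" "snd (dec n i) < n"
proof -
  show "enc n (dec n i) = i" using assms by (simp add: enc_def dec_def)
  show "snd (dec n i) < n" using assms by (simp add: dec_def)
  have "1 \<le> i" "i \<le> n * n" using assms by (auto simp: power2_eq_square)
  then have "i - 1 < n * n" by linarith
  then show "fst (dec n i) < n" using assms by (simp add: dec_def less_mult_imp_div_less)
qed

lemma enc_cases: assumes "i \<in> {1..n^2}" "n > 0"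
  obtains r c where "r < n" "c < n" "i = enc n (r, c)"
  using enc_dec[OF assms] by (metis prod.collapse)

lemma enc_bij: assumes "n > 0" shows "bij_betw (enc n) ({..<n} \<times> {..<n}) {1..n^2}"
proof (rule bij_betw_byWitness[where f'="dec n"])
  show "\<forall>a\<in>{..<n} \<times> {..<n}. dec n (enc n a) = a" using dec_enc by auto
  show "\<forall>a'\<in>{1..n\<^sup>2}. enc n (dec n a') = a'" using enc_dec assms by blast
  show "enc n ` ({..<n} \<times> {..<n}) \<subseteq> {1..n\<^sup>2}" using enc_in by auto
  show "dec n ` {1..n\<^sup>2} \<subseteq> {..<n} \<times> {..<n}"
  proof
    fix x assume "x \<in> dec n ` {1..n\<^sup>2}"
    then obtain i where i: "i \<in> {1..n^2}" "x = dec n i" by blast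
    show "x \<in> {..<n} \<times> {..<n}" using enc_dec(2,3)[OF i(1) assms] i(2) by (simp add: mem_Times_iff)
  qed
qed

lemma row_enc: assumes "r < n" "c < n" shows "row_cycle n (enc n (r, c)) = enc n (r, Suc c mod n)"
  using enc_in[OF assms] assms by (simp add: row_cycle_def enc_def)

lemma col_enc: assumes "r < n" "c < n" shows "col_cycle n (enc n (r, c)) = enc n (Suc r mod n, c)"
  using enc_in[OF assms] assms by (simp add: col_cycle_def enc_def)

lemma row_in: assumes "i \<in> {1..n^2}" "n > 0" shows "row_cycle n i \<in> {1..n^2}"
proof -
  obtain r c where rc: "r < n" "c < n" "i = enc n (r, c)" using enc_cases[OF assms] by blast
  show ?thesis unfolding rc(3) row_enc[OF rc(1,2)] by (rule enc_in) (use rc assms in simp_all)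
qed

lemma col_in: assumes "i \<in> {1..n^2}" "n > 0" shows "col_cycle n i \<in> {1..n^2}"
proof -
  obtain r c where rc: "r < n" "c < n" "i = enc n (r, c)" using enc_cases[OF assms] by blast
  show ?thesis unfolding rc(3) col_enc[OF rc(1,2)] by (rule enc_in) (use rc assms in simp_all)
qed

definition cinv :: "nat \<Rightarrow> nat \<Rightarrow> nat" where
  "cinv n i = enc n ((fst (dec n i) + n - 1) mod n, snd (dec n i))"

lemma cinv_enc: assumes "r < n" "c < n" shows "cinv n (enc n (r, c)) = enc n ((r + n - 1) mod n, c)"
  using assms by (simp add: cinv_def dec_enc)

lemma mod_pred: assumes "r < n" shows "(Suc r mod n + n - 1) mod n = r"
proof -
  have "(Suc r mod n + n - 1) mod n = (Suc r mod n + (n - 1)) mod n" using assms by simp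
  also have "\<dots> = (Suc r + (n - 1)) mod n" by (simp add: mod_add_left_eq)
  also have "Suc r + (n - 1) = r + n" using assms by simp
  finally show ?thesis using assms by simp
qed

lemma mod_pred2: assumes "r < n" shows "Suc ((r + n - 1) mod n) mod n = r"
proof -
  have "Suc ((r + n - 1) mod n) mod n = Suc (r + n - 1) mod n" by (simp add: mod_Suc_eq)
  also have "Suc (r + n - 1) = r + n" using assms by simp
  finally show ?thesis using assms by simp
qed

lemma col_bij: assumes "n > 0" shows "bij_betw (col_cycle n) {1..n^2} {1..n^2}"
proof (rule bij_betw_byWitness[where f'="cinv n"])
  show "\<forall>a\<in>{1..n\<^sup>2}. cinv n (col_cycle n a) = a"
  proof
    fix i assume i: "i \<in> {1..n^2}"
    obtain r c where rc: "r < n" "c < n" "i = enc n (r, c)" using enc_cases[OF i assms] by blast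
    show "cinv n (col_cycle n i) = i" using rc mod_pred[OF rc(1)] by (simp add: col_enc cinv_enc)
  qed
  show "\<forall>a\<in>{1..n\<^sup>2}. col_cycle n (cinv n a) = a"
  proof
    fix i assume i: "i \<in> {1..n^2}"
    obtain r c where rc: "r < n" "c < n" "i = enc n (r, c)" using enc_cases[OF i assms] by blast
    have "(r + n - 1) mod n < n" using assms by simp
    then show "col_cycle n (cinv n i) = i" using rc mod_pred2[OF rc(1)] by (simp add: col_enc cinv_enc)
  qed
  show "col_cycle n ` {1..n\<^sup>2} \<subseteq> {1..n\<^sup>2}" using col_in assms by auto
  show "cinv n ` {1..n\<^sup>2} \<subseteq> {1..n\<^sup>2}"
  proof
    fix x assume "x \<in> cinv n ` {1..n\<^sup>2}"
    then obtain i where i: "i \<in> {1..n^2}" "x = cinv n i" by blast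
    obtain r c where rc: "r < n" "c < n" "i = enc n (r, c)" using enc_cases[OF i(1) assms] by blast
    have "(r + n - 1) mod n < n" using assms by simp
    then show "x \<in> {1..n^2}" using rc i(2) cinv_enc[OF rc(1,2)] enc_in[OF \<open>(r + n - 1) mod n < n\<close> rc(2)] by simp
  qed
qed

lemma id_bij: "bij_betw id I I" by simp

lemma Eb_eval:
  fixes \<psi> :: "'x::finite \<Rightarrow> 'y::finite \<Rightarrow> complex" and g :: "nat \<times> nat \<Rightarrow> nat"
  assumes tau: "bij_betw \<tau> {1..N} {1..N}" and pi: "\<And>i. i \<in> {1..N} \<Longrightarrow> \<pi> (\<tau> i) = \<sigma> i"
    and K: "finite K" and g: "bij_betw g (K \<times> {..<n}) {1..N}" and n: "n > 0"
    and cyc: "\<And>k j. k \<in> K \<Longrightarrow> j < n \<Longrightarrow> \<pi> (g (k, j)) = g (k, Suc j mod n)"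
  shows "Eb \<psi> N \<sigma> \<tau> = mtrace (mpow (mm \<psi> (ch \<psi>)) n) ^ card K"
proof -
  have "Eb \<psi> N \<sigma> \<tau> = (\<Sum>x\<in>PiE {1..N} (\<lambda>_. UNIV). \<Prod>l\<in>{1..N}. mm \<psi> (ch \<psi>) (x (\<pi> l)) (x l))"
    unfolding Eb_def by (rule bip_lemma[where I="{1..N}"], simp, rule tau, erule pi)
  also have "\<dots> = mtrace (mpow (mm \<psi> (ch \<psi>)) n) ^ card K"
    by (rule cyc_lemma[OF K g n cyc])
  finally show ?thesis .
qed




abbreviation T :: "('x::finite \<Rightarrow> 'y::finite \<Rightarrow> complex) \<Rightarrow> nat \<Rightarrow> complex" where
  "T \<psi> n \<equiv> mtrace (mpow (mm \<psi> (ch \<psi>)) n)"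

lemma swap_bij: "bij_betw (\<lambda>(k, j). (j, k)) (A \<times> A) (A \<times> A)"
  by (rule bij_betw_byWitness[where f'="\<lambda>(k, j). (j, k)"]) auto

lemma E_row:
  fixes \<psi> :: "'x::finite \<Rightarrow> 'y::finite \<Rightarrow> complex"
  assumes n: "n > 0" and tau: "bij_betw \<tau> {1..n^2} {1..n^2}"
    and pi: "\<And>i. i \<in> {1..n^2} \<Longrightarrow> row_cycle n (\<tau> i) = \<sigma> i"
  shows "Eb \<psi> (n^2) \<sigma> \<tau> = T \<psi> n ^ n"
proof -
  have "Eb \<psi> (n^2) \<sigma> \<tau> = T \<psi> n ^ card {..<n}"
    by (rule Eb_eval[where \<pi>="row_cycle n" and K="{..<n}" and g="enc n" and n=n])
       (use tau pi enc_bij[OF n] n in \<open>auto simp: row_enc\<close>)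
  then show ?thesis by simp
qed

lemma E_col:
  fixes \<psi> :: "'x::finite \<Rightarrow> 'y::finite \<Rightarrow> complex"
  assumes n: "n > 0" and tau: "bij_betw \<tau> {1..n^2} {1..n^2}"
    and pi: "\<And>i. i \<in> {1..n^2} \<Longrightarrow> col_cycle n (\<tau> i) = \<sigma> i"
  shows "Eb \<psi> (n^2) \<sigma> \<tau> = T \<psi> n ^ n"
proof -
  have g: "bij_betw (enc n \<circ> (\<lambda>(k, j). (j, k))) ({..<n} \<times> {..<n}) {1..n^2}"
    by (rule bij_betw_trans[OF swap_bij enc_bij[OF n]])
  have "Eb \<psi> (n^2) \<sigma> \<tau> = T \<psi> n ^ card {..<n}"
    by (rule Eb_eval[where \<pi>="col_cycle n" and K="{..<n}" and g="enc n \<circ> (\<lambda>(k, j). (j, k))" and n=n])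
       (use tau pi g n in \<open>auto simp: col_enc\<close>)
  then show ?thesis by simp
qed

lemma cinv_col: assumes "n > 0" "i \<in> {1..n^2}" shows "cinv n (col_cycle n i) = i"
proof -
  obtain r c where rc: "r < n" "c < n" "i = enc n (r, c)" using enc_cases[OF assms(2,1)] by blast
  show ?thesis using rc mod_pred[OF rc(1)] by (simp add: col_enc cinv_enc)
qed

lemma E_diag:
  fixes \<psi> :: "'x::finite \<Rightarrow> 'y::finite \<Rightarrow> complex"
  assumes n: "n > 0"
  shows "Eb \<psi> (n^2) (row_cycle n) (col_cycle n) = T \<psi> n ^ n"
proof -
  define h where "h = (\<lambda>(k::nat, j::nat). ((k + (n - 1) * j) mod n, j))"
  have nj: "(n - Suc 0) * j + j = n * j" "j + (n - Suc 0) * j = n * j" for j using n by (cases n; auto)+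
  have hb: "bij_betw h ({..<n} \<times> {..<n}) ({..<n} \<times> {..<n})"
  proof (rule bij_betw_byWitness[where f'="\<lambda>(r, c). ((r + c) mod n, c)"])
    show "\<forall>a\<in>{..<n} \<times> {..<n}. (\<lambda>(r, c). ((r + c) mod n, c)) (h a) = a"
    proof
      fix a assume a: "a \<in> {..<n} \<times> {..<n}"
      obtain k j where kj: "a = (k, j)" "k < n" "j < n" using a by auto
      have "((k + (n - 1) * j) mod n + j) mod n = (k + ((n - 1) * j + j)) mod n"
        by (simp add: mod_add_left_eq add.assoc)
      also have "\<dots> = k" using kj by (simp add: nj)
      finally show "(\<lambda>(r, c). ((r + c) mod n, c)) (h a) = a" by (simp add: h_def kj)
    qed
    show "\<forall>a\<in>{..<n} \<times> {..<n}. h ((\<lambda>(r, c). ((r + c) mod n, c)) a) = a"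
    proof
      fix a assume a: "a \<in> {..<n} \<times> {..<n}"
      obtain r c where rc: "a = (r, c)" "r < n" "c < n" using a by auto
      have "((r + c) mod n + (n - 1) * c) mod n = (r + (c + (n - 1) * c)) mod n"
        by (simp add: mod_add_left_eq add.assoc)
      also have "\<dots> = r" using rc by (simp add: nj)
      finally show "h ((\<lambda>(r, c). ((r + c) mod n, c)) a) = a" by (simp add: h_def rc)
    qed
    show "h ` ({..<n} \<times> {..<n}) \<subseteq> {..<n} \<times> {..<n}" using n by (auto simp: h_def)
    show "(\<lambda>(r, c). ((r + c) mod n, c)) ` ({..<n} \<times> {..<n}) \<subseteq> {..<n} \<times> {..<n}" using n by auto
  qed
  have g: "bij_betw (enc n \<circ> h) ({..<n} \<times> {..<n}) {1..n^2}"
    by (rule bij_betw_trans[OF hb enc_bij[OF n]])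
  define \<pi> where "\<pi> i = row_cycle n (cinv n i)" for i
  have pi: "\<pi> (col_cycle n i) = row_cycle n i" if "i \<in> {1..n^2}" for i
    using cinv_col[OF n that] by (simp add: \<pi>_def)
  have cyc: "\<pi> ((enc n \<circ> h) (k, j)) = (enc n \<circ> h) (k, Suc j mod n)" if kj: "k \<in> {..<n}" "j < n" for k j
  proof -
    define r where "r = (k + (n - 1) * j) mod n"
    have r: "r < n" using n by (simp add: r_def)
    have r2: "(r + n - 1) mod n < n" using n by simp
    have "(r + n - 1) mod n = (r + (n - 1)) mod n" using n by simp
    also have "\<dots> = (k + (n - 1) * j + (n - 1)) mod n" by (simp add: r_def mod_add_left_eq)
    also have "\<dots> = (k + (n - 1) * Suc j) mod n" by (simp only: mult_Suc ac_simps)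
    also have "\<dots> = (k + (n - 1) * (Suc j mod n)) mod n" by (metis mod_add_right_eq mod_mult_right_eq)
    finally have e: "(r + n - 1) mod n = (k + (n - 1) * (Suc j mod n)) mod n" .
    have "\<pi> ((enc n \<circ> h) (k, j)) = row_cycle n (enc n ((r + n - 1) mod n, j))"
      using kj n by (simp add: \<pi>_def h_def r_def cinv_enc)
    also have "\<dots> = enc n ((r + n - 1) mod n, Suc j mod n)" by (rule row_enc[OF r2 kj(2)])
    also have "\<dots> = (enc n \<circ> h) (k, Suc j mod n)" by (simp only: comp_def h_def case_prod_conv e)
    finally show ?thesis .
  qed
  have "Eb \<psi> (n^2) (row_cycle n) (col_cycle n) = T \<psi> n ^ card {..<n}"
    by (rule Eb_eval[where \<pi>=\<pi> and K="{..<n}" and g="enc n \<circ> h" and n=n])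
       (use col_bij[OF n] pi g n cyc in auto)
  then show ?thesis by simp
qed

lemma Zn_val:
  fixes \<psi>1 :: "'a1::finite \<Rightarrow> 'b1::finite \<Rightarrow> complex"
    and \<psi>2 :: "'a2::finite \<Rightarrow> 'c1::finite \<Rightarrow> complex"
    and \<psi>3 :: "'b2::finite \<Rightarrow> 'c2::finite \<Rightarrow> complex"
  assumes n: "n > 0"
  shows "Zn n (tri_state \<psi>1 \<psi>2 \<psi>3) = T \<psi>1 n ^ n * T \<psi>2 n ^ n * T \<psi>3 n ^ n"
proof -
  have "Zn n (tri_state \<psi>1 \<psi>2 \<psi>3) = Eb \<psi>1 (n^2) (row_cycle n) (col_cycle n) * Eb \<psi>2 (n^2) (row_cycle n) id * Eb \<psi>3 (n^2) (col_cycle n) id"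
    unfolding Zn_def by (rule factor) (use row_in col_in n in auto)
  also have "\<dots> = T \<psi>1 n ^ n * T \<psi>2 n ^ n * T \<psi>3 n ^ n"
    using E_diag[OF n, of \<psi>1] E_row[OF n id_bij, of "row_cycle n" \<psi>2] E_col[OF n id_bij, of "col_cycle n" \<psi>3]
    by simp
  finally show ?thesis .
qed




lemma Eb_cong:
  assumes "\<And>i. i \<in> {1..N} \<Longrightarrow> \<sigma> i = \<sigma>' i" "\<And>i. i \<in> {1..N} \<Longrightarrow> \<tau> i = \<tau>' i"
  shows "Eb \<psi> N \<sigma> \<tau> = Eb \<psi> N \<sigma>' \<tau>'"
  unfolding Eb_def by (intro sum.cong refl arg_cong2[where f="(*)"] prod.cong) (simp_all add: assms)

lemma set4: "{1..2^2::nat} = {1,2,3,4}" by auto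

lemma GC_bij: "bij_betw permGC {1..2^2} {1..2^2}"
  by (rule bij_betw_byWitness[where f'=permGC]) (auto simp: set4 permGC_def)

lemma G_val:
  fixes \<psi>1 :: "'a1::finite \<Rightarrow> 'b1::finite \<Rightarrow> complex"
    and \<psi>2 :: "'a2::finite \<Rightarrow> 'c1::finite \<Rightarrow> complex"
    and \<psi>3 :: "'b2::finite \<Rightarrow> 'c2::finite \<Rightarrow> complex"
  shows "perm_expect (tri_state \<psi>1 \<psi>2 \<psi>3) 4 permGA permGB permGC = T \<psi>1 2 ^ 2 * T \<psi>2 2 ^ 2 * T \<psi>3 2 ^ 2"
proof -
  have s4: "{1..4::nat} = {1,2,3,4}" by auto
  have "perm_expect (tri_state \<psi>1 \<psi>2 \<psi>3) 4 permGA permGB permGC = Eb \<psi>1 4 permGA permGB * Eb \<psi>2 4 permGA permGC * Eb \<psi>3 4 permGB permGC"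
    by (rule factor; unfold s4; auto simp: permGA_def permGB_def permGC_def)
  also have "Eb \<psi>1 4 permGA permGB = Eb \<psi>1 (2^2) permGA permGB" by simp
  also have "\<dots> = Eb \<psi>1 (2^2) (row_cycle 2) (col_cycle 2)"
    by (rule Eb_cong; unfold set4; auto simp: permGA_def permGB_def row_cycle_def col_cycle_def)
  also have "\<dots> = T \<psi>1 2 ^ 2" by (rule E_diag) simp
  also have "Eb \<psi>2 4 permGA permGC = Eb \<psi>2 (2^2) permGA permGC" by simp
  also have "\<dots> = T \<psi>2 2 ^ 2"
    by (rule E_col[OF _ GC_bij]; (unfold set4)?; auto simp: permGA_def permGC_def col_cycle_def)
  also have "Eb \<psi>3 4 permGB permGC = Eb \<psi>3 (2^2) permGB permGC" by simp
  also have "\<dots> = T \<psi>3 2 ^ 2"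
    by (rule E_row[OF _ GC_bij]; (unfold set4)?; auto simp: permGB_def permGC_def row_cycle_def)
  finally show ?thesis .
qed




definition kron :: "('x1 \<Rightarrow> 'x1 \<Rightarrow> complex) \<Rightarrow> ('x2 \<Rightarrow> 'x2 \<Rightarrow> complex) \<Rightarrow> 'x1 \<times> 'x2 \<Rightarrow> 'x1 \<times> 'x2 \<Rightarrow> complex" where
  "kron A B p q = A (fst p) (fst q) * B (snd p) (snd q)"

lemma sum_pair: "(\<Sum>b\<in>(UNIV :: ('p::finite \<times> 'q::finite) set). f b) = (\<Sum>b1\<in>UNIV. \<Sum>b2\<in>UNIV. f (b1, b2))"
  by (subst UNIV_Times_UNIV[symmetric]) (rule sum.cartesian_product')

lemma mm_kron: "mm (kron A B) (kron C D) = kron (mm A C) (mm B D)"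
proof (intro ext)
  fix p q :: "'a::finite \<times> 'b::finite"
  show "mm (kron A B) (kron C D) p q = kron (mm A C) (mm B D) p q"
    unfolding mm_def kron_def sum_pair sum_product by (simp add: mult_ac)
qed

lemma mpow_kron: "mpow (kron A B) n = kron (mpow A n) (mpow B n)"
proof (induction n)
  case 0 show ?case by (intro ext) (auto simp: kron_def idm_def prod_eq_iff)
next
  case (Suc n) then show ?case by (simp add: mpow_Suc' mm_kron del: mpow.simps)
qed

lemma mtrace_kron: "mtrace (kron A B) = mtrace A * mtrace B"
  unfolding mtrace_def kron_def sum_pair sum_product by simp

definition nrm :: "('x::finite \<Rightarrow> 'y::finite \<Rightarrow> complex) \<Rightarrow> complex" where
  "nrm \<psi> = (\<Sum>x\<in>UNIV. \<Sum>y\<in>UNIV. \<psi> x y * cnj (\<psi> x y))"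

lemma unit_nrm: assumes "unit_bip \<psi>" shows "nrm \<psi> = 1" "frob \<psi> = 1"
proof -
  show "frob \<psi> = 1" using assms by (simp add: unit_bip_def frob_def)
  have h: "nrm \<psi> = complex_of_real (\<Sum>x\<in>UNIV. \<Sum>y\<in>UNIV. (cmod (\<psi> x y))^2)"
    unfolding nrm_def by (simp add: complex_norm_square[symmetric] del: of_real_power)
  show "nrm \<psi> = 1" using h assms unfolding unit_bip_def by (metis of_real_1)
qed

lemma fs1:
  fixes F G :: "_ \<Rightarrow> complex" and H :: "_ \<Rightarrow> _ \<Rightarrow> complex"
  shows "(\<Sum>a\<in>A. \<Sum>b\<in>B. \<Sum>c\<in>C. \<Sum>d\<in>D. F a * G c * H b d)
   = (\<Sum>a\<in>A. F a) * (\<Sum>c\<in>C. G c) * (\<Sum>b\<in>B. \<Sum>d\<in>D. H b d)"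
proof -
  have "(\<Sum>a\<in>A. \<Sum>b\<in>B. \<Sum>c\<in>C. \<Sum>d\<in>D. F a * G c * H b d) = (\<Sum>a\<in>A. \<Sum>c\<in>C. \<Sum>b\<in>B. \<Sum>d\<in>D. F a * G c * H b d)"
    by (rule sum.cong[OF refl], rule sum.swap)
  also have "\<dots> = (\<Sum>a\<in>A. F a) * (\<Sum>c\<in>C. G c) * (\<Sum>b\<in>B. \<Sum>d\<in>D. H b d)"
    unfolding mult.assoc sum_distrib_right by (unfold sum_distrib_left) (rule refl)
  finally show ?thesis .
qed

lemma fs2:
  fixes F G :: "_ \<Rightarrow> complex" and H :: "_ \<Rightarrow> _ \<Rightarrow> complex"
  shows "(\<Sum>a\<in>A. \<Sum>b\<in>B. \<Sum>c\<in>C. \<Sum>d\<in>D. F a * H b c * G d)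
   = (\<Sum>a\<in>A. F a) * (\<Sum>b\<in>B. \<Sum>c\<in>C. H b c) * (\<Sum>d\<in>D. G d)"
  unfolding mult.assoc sum_distrib_right by (unfold sum_distrib_left) (rule refl)

lemma fs3:
  fixes F G :: "_ \<Rightarrow> complex" and H :: "_ \<Rightarrow> _ \<Rightarrow> complex"
  shows "(\<Sum>a\<in>A. \<Sum>b\<in>B. \<Sum>c\<in>C. \<Sum>d\<in>D. H a c * F b * G d)
   = (\<Sum>a\<in>A. \<Sum>c\<in>C. H a c) * (\<Sum>b\<in>B. F b) * (\<Sum>d\<in>D. G d)"
proof -
  have "(\<Sum>a\<in>A. \<Sum>b\<in>B. \<Sum>c\<in>C. \<Sum>d\<in>D. H a c * F b * G d) = (\<Sum>a\<in>A. \<Sum>c\<in>C. \<Sum>b\<in>B. \<Sum>d\<in>D. H a c * F b * G d)"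
    by (rule sum.cong[OF refl], rule sum.swap)
  also have "\<dots> = (\<Sum>a\<in>A. \<Sum>c\<in>C. H a c) * (\<Sum>b\<in>B. F b) * (\<Sum>d\<in>D. G d)"
    unfolding mult.assoc sum_distrib_right by (unfold sum_distrib_left) (rule refl)
  finally show ?thesis .
qed

context
  fixes \<psi>1 :: "'a1::finite \<Rightarrow> 'b1::finite \<Rightarrow> complex"
    and \<psi>2 :: "'a2::finite \<Rightarrow> 'c1::finite \<Rightarrow> complex"
    and \<psi>3 :: "'b2::finite \<Rightarrow> 'c2::finite \<Rightarrow> complex"
begin


lemma rhoA_tri: "rhoA (tri_state \<psi>1 \<psi>2 \<psi>3) p q = kron (mm \<psi>1 (ch \<psi>1)) (mm \<psi>2 (ch \<psi>2)) p q * nrm \<psi>3"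
proof -
  have "rhoA (tri_state \<psi>1 \<psi>2 \<psi>3) p q = (\<Sum>b1\<in>UNIV. \<Sum>b2\<in>UNIV. \<Sum>c1\<in>UNIV. \<Sum>c2\<in>UNIV.
     (\<psi>1 (fst p) b1 * cnj (\<psi>1 (fst q) b1)) * (\<psi>2 (snd p) c1 * cnj (\<psi>2 (snd q) c1)) * (\<psi>3 b2 c2 * cnj (\<psi>3 b2 c2)))"
    unfolding rhoA_def sum_pair tri_state_def by (simp add: mult_ac)
  also have "\<dots> = kron (mm \<psi>1 (ch \<psi>1)) (mm \<psi>2 (ch \<psi>2)) p q * nrm \<psi>3"
    unfolding fs1 by (simp add: kron_def mm_def ch_def nrm_def)
  finally show ?thesis .
qed

lemma rhoB_tri: "rhoB (tri_state \<psi>1 \<psi>2 \<psi>3) p q = kron (tp (mm (ch \<psi>1) \<psi>1)) (mm \<psi>3 (ch \<psi>3)) p q * nrm \<psi>2"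
proof -
  have "rhoB (tri_state \<psi>1 \<psi>2 \<psi>3) p q = (\<Sum>a1\<in>UNIV. \<Sum>a2\<in>UNIV. \<Sum>c1\<in>UNIV. \<Sum>c2\<in>UNIV.
     (\<psi>1 a1 (fst p) * cnj (\<psi>1 a1 (fst q))) * (\<psi>2 a2 c1 * cnj (\<psi>2 a2 c1)) * (\<psi>3 (snd p) c2 * cnj (\<psi>3 (snd q) c2)))"
    unfolding rhoB_def sum_pair tri_state_def by (simp add: mult_ac)
  also have "\<dots> = kron (tp (mm (ch \<psi>1) \<psi>1)) (mm \<psi>3 (ch \<psi>3)) p q * nrm \<psi>2"
    unfolding fs2 by (simp add: kron_def mm_def ch_def nrm_def tp_def mult_ac)
  finally show ?thesis .
qed

lemma rhoC_tri: "rhoC (tri_state \<psi>1 \<psi>2 \<psi>3) p q = kron (tp (mm (ch \<psi>2) \<psi>2)) (tp (mm (ch \<psi>3) \<psi>3)) p q * nrm \<psi>1"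
proof -
  have "rhoC (tri_state \<psi>1 \<psi>2 \<psi>3) p q = (\<Sum>a1\<in>UNIV. \<Sum>a2\<in>UNIV. \<Sum>b1\<in>UNIV. \<Sum>b2\<in>UNIV.
     (\<psi>1 a1 b1 * cnj (\<psi>1 a1 b1)) * (\<psi>2 a2 (fst p) * cnj (\<psi>2 a2 (fst q))) * (\<psi>3 b2 (snd p) * cnj (\<psi>3 b2 (snd q))))"
    unfolding rhoC_def sum_pair tri_state_def by (simp add: mult_ac)
  also have "\<dots> = kron (tp (mm (ch \<psi>2) \<psi>2)) (tp (mm (ch \<psi>3) \<psi>3)) p q * nrm \<psi>1"
    unfolding fs3 by (simp add: kron_def mm_def ch_def nrm_def tp_def mult_ac)
  finally show ?thesis .
qed

end




context
  fixes \<psi>1 :: "'a1::finite \<Rightarrow> 'b1::finite \<Rightarrow> complex"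
    and \<psi>2 :: "'a2::finite \<Rightarrow> 'c1::finite \<Rightarrow> complex"
    and \<psi>3 :: "'b2::finite \<Rightarrow> 'c2::finite \<Rightarrow> complex"
  assumes u1: "unit_bip \<psi>1" and u2: "unit_bip \<psi>2" and u3: "unit_bip \<psi>3"
begin

lemma tr_rhoA: "mtrace (mpow (rhoA (tri_state \<psi>1 \<psi>2 \<psi>3)) n) = T \<psi>1 n * T \<psi>2 n"
proof -
  have "rhoA (tri_state \<psi>1 \<psi>2 \<psi>3) = kron (mm \<psi>1 (ch \<psi>1)) (mm \<psi>2 (ch \<psi>2))"
    by (intro ext) (simp add: rhoA_tri unit_nrm[OF u3])
  then show ?thesis by (simp add: mpow_kron mtrace_kron)
qed

lemma tr_rhoB: assumes "n \<ge> 1" shows "mtrace (mpow (rhoB (tri_state \<psi>1 \<psi>2 \<psi>3)) n) = T \<psi>1 n * T \<psi>3 n"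
proof -
  have "rhoB (tri_state \<psi>1 \<psi>2 \<psi>3) = kron (tp (mm (ch \<psi>1) \<psi>1)) (mm \<psi>3 (ch \<psi>3))"
    by (intro ext) (simp add: rhoB_tri unit_nrm[OF u2])
  then show ?thesis by (simp add: mpow_kron mtrace_kron mpow_tp mtrace_tp tr_swap[OF assms] del: mpow.simps)
qed

lemma tr_rhoC: assumes "n \<ge> 1" shows "mtrace (mpow (rhoC (tri_state \<psi>1 \<psi>2 \<psi>3)) n) = T \<psi>2 n * T \<psi>3 n"
proof -
  have "rhoC (tri_state \<psi>1 \<psi>2 \<psi>3) = kron (tp (mm (ch \<psi>2) \<psi>2)) (tp (mm (ch \<psi>3) \<psi>3))"
    by (intro ext) (simp add: rhoC_tri unit_nrm[OF u1])
  then show ?thesis by (simp add: mpow_kron mtrace_kron mpow_tp mtrace_tp tr_swap[OF assms] del: mpow.simps)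
qed

lemma renyi_sum:
  assumes n: "n \<ge> 1"
  obtains t1 t2 t3 where "t1 > 0" "t2 > 0" "t3 > 0"
    "T \<psi>1 n = complex_of_real t1" "T \<psi>2 n = complex_of_real t2" "T \<psi>3 n = complex_of_real t3"
    "renyi n (rhoA (tri_state \<psi>1 \<psi>2 \<psi>3)) = (ln t1 + ln t2) / (1 - real n)"
    "renyi n (rhoB (tri_state \<psi>1 \<psi>2 \<psi>3)) = (ln t1 + ln t3) / (1 - real n)"
    "renyi n (rhoC (tri_state \<psi>1 \<psi>2 \<psi>3)) = (ln t2 + ln t3) / (1 - real n)"
proof -
  obtain t1 where t1: "t1 > 0" "T \<psi>1 n = complex_of_real t1" using tr_pos[of \<psi>1 n] unit_nrm(2)[OF u1] by auto
  obtain t2 where t2: "t2 > 0" "T \<psi>2 n = complex_of_real t2" using tr_pos[of \<psi>2 n] unit_nrm(2)[OF u2] by auto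
  obtain t3 where t3: "t3 > 0" "T \<psi>3 n = complex_of_real t3" using tr_pos[of \<psi>3 n] unit_nrm(2)[OF u3] by auto
  show ?thesis
  proof (rule that[OF t1(1) t2(1) t3(1) t1(2) t2(2) t3(2)])
    show "renyi n (rhoA (tri_state \<psi>1 \<psi>2 \<psi>3)) = (ln t1 + ln t2) / (1 - real n)"
      using t1 t2 by (simp add: renyi_def tr_rhoA ln_mult)
    show "renyi n (rhoB (tri_state \<psi>1 \<psi>2 \<psi>3)) = (ln t1 + ln t3) / (1 - real n)"
      using t1 t3 by (simp add: renyi_def tr_rhoB[OF n] ln_mult)
    show "renyi n (rhoC (tri_state \<psi>1 \<psi>2 \<psi>3)) = (ln t2 + ln t3) / (1 - real n)"
      using t2 t3 by (simp add: renyi_def tr_rhoC[OF n] ln_mult)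
  qed
qed

lemma main_n:
  assumes n: "n \<ge> 2"
  shows "Im (Zn n (tri_state \<psi>1 \<psi>2 \<psi>3)) = 0 \<and> Re (Zn n (tri_state \<psi>1 \<psi>2 \<psi>3)) > 0 \<and>
            Gn n (tri_state \<psi>1 \<psi>2 \<psi>3) =
              (renyi n (rhoA (tri_state \<psi>1 \<psi>2 \<psi>3)) + renyi n (rhoB (tri_state \<psi>1 \<psi>2 \<psi>3))
               + renyi n (rhoC (tri_state \<psi>1 \<psi>2 \<psi>3))) / 2"
proof -
  have n1: "n \<ge> 1" using n by simp
  obtain t1 t2 t3 where t: "t1 > 0" "t2 > 0" "t3 > 0"
    "T \<psi>1 n = complex_of_real t1" "T \<psi>2 n = complex_of_real t2" "T \<psi>3 n = complex_of_real t3"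
    and r: "renyi n (rhoA (tri_state \<psi>1 \<psi>2 \<psi>3)) = (ln t1 + ln t2) / (1 - real n)"
    "renyi n (rhoB (tri_state \<psi>1 \<psi>2 \<psi>3)) = (ln t1 + ln t3) / (1 - real n)"
    "renyi n (rhoC (tri_state \<psi>1 \<psi>2 \<psi>3)) = (ln t2 + ln t3) / (1 - real n)"
    using renyi_sum[OF n1] by metis
  have Z: "Zn n (tri_state \<psi>1 \<psi>2 \<psi>3) = complex_of_real ((t1 * t2 * t3) ^ n)"
    using Zn_val[of n \<psi>1 \<psi>2 \<psi>3] n t by (simp add: power_mult_distrib)
  have pos: "t1 * t2 * t3 > 0" using t by simp
  have G: "Gn n (tri_state \<psi>1 \<psi>2 \<psi>3) = (ln t1 + ln t2 + ln t3) / (1 - real n)"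
  proof -
    have "Gn n (tri_state \<psi>1 \<psi>2 \<psi>3) = (real n * (ln t1 + ln t2 + ln t3)) / (real n * (1 - real n))"
      using pos t by (simp add: Gn_def Z ln_realpow ln_mult)
    also have "\<dots> = (ln t1 + ln t2 + ln t3) / (1 - real n)" using n by simp
    finally show ?thesis .
  qed
  have nn: "1 - real n \<noteq> 0" using n by simp
  show ?thesis using pos
    by (simp add: Z G r) (simp add: add_divide_distrib[symmetric] algebra_simps)
qed

lemma main_G:
  "G (tri_state \<psi>1 \<psi>2 \<psi>3) =
    (renyi 2 (rhoA (tri_state \<psi>1 \<psi>2 \<psi>3)) + renyi 2 (rhoB (tri_state \<psi>1 \<psi>2 \<psi>3))
     + renyi 2 (rhoC (tri_state \<psi>1 \<psi>2 \<psi>3))) / 2"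
proof -
  obtain t1 t2 t3 where t: "t1 > 0" "t2 > 0" "t3 > 0"
    "T \<psi>1 2 = complex_of_real t1" "T \<psi>2 2 = complex_of_real t2" "T \<psi>3 2 = complex_of_real t3"
    and r: "renyi 2 (rhoA (tri_state \<psi>1 \<psi>2 \<psi>3)) = (ln t1 + ln t2) / (1 - real 2)"
    "renyi 2 (rhoB (tri_state \<psi>1 \<psi>2 \<psi>3)) = (ln t1 + ln t3) / (1 - real 2)"
    "renyi 2 (rhoC (tri_state \<psi>1 \<psi>2 \<psi>3)) = (ln t2 + ln t3) / (1 - real 2)"
    using renyi_sum[of 2] by (metis one_le_numeral)
  have P: "perm_expect (tri_state \<psi>1 \<psi>2 \<psi>3) 4 permGA permGB permGC = complex_of_real ((t1 * t2 * t3) ^ 2)"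
    using G_val[of \<psi>1 \<psi>2 \<psi>3] t by (simp add: power_mult_distrib)
  have pos: "t1 * t2 * t3 > 0" using t by simp
  have "G (tri_state \<psi>1 \<psi>2 \<psi>3) = - (ln t1 + ln t2 + ln t3)"
    using pos t by (simp add: G_def P ln_realpow ln_mult) (simp add: field_simps)
  then show ?thesis using r by simp
qed

end


theorem mainTheorem9:
  fixes \<psi>1 :: "'a1::finite \<Rightarrow> 'b1::finite \<Rightarrow> complex"
    and \<psi>2 :: "'a2::finite \<Rightarrow> 'c1::finite \<Rightarrow> complex"
    and \<psi>3 :: "'b2::finite \<Rightarrow> 'c2::finite \<Rightarrow> complex"
  assumes "unit_bip \<psi>1" and "unit_bip \<psi>2" and "unit_bip \<psi>3"
  shows "(\<forall>n::nat. n \<ge> 2 \<longrightarrow>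
            Im (Zn n (tri_state \<psi>1 \<psi>2 \<psi>3)) = 0 \<and> Re (Zn n (tri_state \<psi>1 \<psi>2 \<psi>3)) > 0 \<and>
            Gn n (tri_state \<psi>1 \<psi>2 \<psi>3) =
              (renyi n (rhoA (tri_state \<psi>1 \<psi>2 \<psi>3)) + renyi n (rhoB (tri_state \<psi>1 \<psi>2 \<psi>3))
               + renyi n (rhoC (tri_state \<psi>1 \<psi>2 \<psi>3))) / 2)
         \<and> G (tri_state \<psi>1 \<psi>2 \<psi>3) =
              (renyi 2 (rhoA (tri_state \<psi>1 \<psi>2 \<psi>3)) + renyi 2 (rhoB (tri_state \<psi>1 \<psi>2 \<psi>3))
               + renyi 2 (rhoC (tri_state \<psi>1 \<psi>2 \<psi>3))) / 2"
  using main_n[OF assms] main_G[OF assms] by blast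

end
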